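(* Let $T,M,\delta,\tau$ be as in the setup, let $\xi>0$, $\varepsilon\in(0,1)$, $\eta\in(0,1)$ and an integer $J\ge1$. Consider the following randomized procedure (HybridPeel). Set $W_1=V_T$. For $i=1,\dots,J$, as long as $W_i\neq\emptyset$: random estimates $\hat C_i(w)\ge0$ for all $w\in W_i$ are produced; set $\hat\tau(W_i)=\frac1k\sum_{w\in W_i}\hat C_i(w)$, $L_i=\{w\in W_i:\hat C_i(w)\le k(1+\xi)\hat\tau(W_i)/|W_i|\}$ and $W_{i+1}=W_i\setminus L_i$. Then run the Greedy peeling procedure on $T[W_{J+1}]$ (if $W_{J+1}$ is nonempty): starting from $U_0=W_{J+1}$, repeatedly remove a vertex of minimum temporal motif degree $C_{U}(\cdot)$ in the current set $U$ (ties broken arbitrarily) until $k$ vertices remain, and let $W'$ be a set of maximum density $\rho$ among all sets visited in this phase. Output the set among the candidates $W_1,\dots,W_J$ (each scored by $\hat\tau(W_j)/|W_j|$) and $W'$ (scored by $\rho(W')$) with the largest score. Assume that for every $i\le J$, conditionally on everything before iteration $i$, the event $\{\,|\hat C_i(w)-C_{W_i}(w)|\le\varepsilon\,C_{W_i}(w)\text{ for all }w\in W_i\,\}$ has probability at least $1-\eta/J$. Then with probability at least $1-\eta$ the output $W$ satisfies $\rho(W)\ge\frac{(1-\varepsilon)^2}{k(1+\xi)(1+\varepsilon)^2}\mathrm{OPT}$ when $J\ge2$, and $\rho(W)\ge\frac{(1-\varepsilon)^2}{k(1+\xi)(1+\varepsilon)}\mathrm{OPT}$ when $J=1$.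
   Context: Setup. A temporal network is a pair $T=(V_T,E_T)$ where $V_T$ is a finite set of $n$ vertices and $E_T$ is a finite set of temporal edges $(u,v,t)$ with $u,v\in V_T$ and timestamp $t\in\mathbb{R}_{>0}$; timestamps are assumed distinct. A $k$-vertex $\ell$-edge temporal motif ($k,\ell\ge 2$) is a pair $M=(K,\sigma)$ where $K=(V_K,E_K)$ is a directed, weakly connected multigraph with $|V_K|=k$, $|E_K|=\ell$, and $\sigma$ is an ordering of $E_K$; equivalently $M$ is the sequence $\langle(x_1,y_1),\dots,(x_\ell,y_\ell)\rangle$ of its edges in the order $\sigma$. Given $\delta>0$, a $\delta$-instance of $M$ in a temporal network is a sequence $S=\langle(x'_1,y'_1,t'_1),\dots,(x'_\ell,y'_\ell,t'_\ell)\rangle$ of $\ell$ distinct temporal edges of that network with $t'_1<\dots<t'_\ell$ such that (1) there is a bijection $h$ from the set of vertices appearing in $S$ onto $V_K$ with $h(x'_i)=x_i$ and $h(y'_i)=y_i$ for all $i\in[\ell]$, and (2) $t'_\ell-t'_1\le\delta$. We write $v\in S$ if $v$ is an endpoint of some edge of $S$; every $\delta$-instance contains exactly $k$ vertices. For $W\subseteq V_T$, $T[W]=(W,\{(u,v,t)\in E_T:u,v\in W\})$ is the induced temporal subnetwork and $\mathcal{S}_W$ is the set of $\delta$-instances of $M$ in $T[W]$. A weighting function $\tau$ assigns a weight $\tau(S)>0$ to each $\delta$-instance $S$ of $M$ in $T$; for $W\subseteq V_T$, $\tau(W)=\sum_{S\in\mathcal{S}_W}\tau(S)$. The temporal motif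 degree of $v$ in $T[W]$ is $C_W(v)=\sum_{S\in\mathcal{S}_W:\,v\in S}\tau(S)$. The density of a nonempty $W\subseteq V_T$ is $\rho(W)=\tau(W)/|W|$, and $\mathrm{OPT}=\max_{\emptyset\ne W\subseteq V_T}\rho(W)$ is the optimal value of the Temporal Motif Densest Subnetwork (TMDS) problem. *)

theory Defs
  imports "HOL-Probability.Probability_Mass_Function"
begin

type_synonym 'v tedge = "'v \<times> 'v \<times> real"

definition ts :: "'v tedge \<Rightarrow> real" where
  "ts e = snd (snd e)"

definition temporal_network :: "'v set \<Rightarrow> 'v tedge set \<Rightarrow> bool" where
  "temporal_network V E \<longleftrightarrow> finite V \<and> finite E \<and>
     (\<forall>(u, v, t) \<in> E. u \<in> V \<and> v \<in> V \<and> t > 0) \<and> inj_on ts E"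

text \<open>Motif given as the sequence of its edges in the order sigma; V_K = endpoints.\<close>
definition motif_vertices :: "('m \<times> 'm) list \<Rightarrow> 'm set" where
  "motif_vertices M = fst ` set M \<union> snd ` set M"

definition temporal_motif :: "('m \<times> 'm) list \<Rightarrow> bool" where
  "temporal_motif M \<longleftrightarrow> length M \<ge> 2 \<and> card (motif_vertices M) \<ge> 2 \<and>
     (\<forall>x \<in> motif_vertices M. \<forall>y \<in> motif_vertices M.
        (x, y) \<in> (set M \<union> (set M)\<inverse>)\<^sup>*)"

abbreviation mk :: "('m \<times> 'm) list \<Rightarrow> nat" where
  "mk M \<equiv> card (motif_vertices M)"

definition inst_vertices :: "'v tedge list \<Rightarrow> 'v set" where
  "inst_vertices S = fst ` set S \<union> (fst \<circ> snd) ` set S"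

definition induced :: "'v tedge set \<Rightarrow> 'v set \<Rightarrow> 'v tedge set" where
  "induced E W = {(u, v, t) \<in> E. u \<in> W \<and> v \<in> W}"

definition is_instance :: "('m \<times> 'm) list \<Rightarrow> real \<Rightarrow> 'v tedge set \<Rightarrow> 'v tedge list \<Rightarrow> bool" where
  "is_instance M \<delta> E S \<longleftrightarrow>
     length S = length M \<and> distinct S \<and> set S \<subseteq> E \<and>
     sorted_wrt (\<lambda>a b. ts a < ts b) S \<and>
     (\<exists>h. bij_betw h (inst_vertices S) (motif_vertices M) \<and>
        (\<forall>i < length M. h (fst (S ! i)) = fst (M ! i) \<and> h (fst (snd (S ! i))) = snd (M ! i))) \<and>
     ts (last S) - ts (hd S) \<le> \<delta>"

definition instances :: "('m \<times> 'm) list \<Rightarrow> real \<Rightarrow> 'v tedge set \<Rightarrow> 'v set \<Rightarrow> 'v tedge list set" where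
  "instances M \<delta> E W = {S. is_instance M \<delta> (induced E W) S}"

definition tauW :: "('m \<times> 'm) list \<Rightarrow> real \<Rightarrow> 'v tedge set \<Rightarrow> ('v tedge list \<Rightarrow> real) \<Rightarrow> 'v set \<Rightarrow> real" where
  "tauW M \<delta> E \<tau> W = (\<Sum>S \<in> instances M \<delta> E W. \<tau> S)"

definition mdeg :: "('m \<times> 'm) list \<Rightarrow> real \<Rightarrow> 'v tedge set \<Rightarrow> ('v tedge list \<Rightarrow> real) \<Rightarrow> 'v set \<Rightarrow> 'v \<Rightarrow> real" where
  "mdeg M \<delta> E \<tau> W v = (\<Sum>S \<in> {S \<in> instances M \<delta> E W. v \<in> inst_vertices S}. \<tau> S)"

definition rho :: "('m \<times> 'm) list \<Rightarrow> real \<Rightarrow> 'v tedge set \<Rightarrow> ('v tedge list \<Rightarrow> real) \<Rightarrow> 'v set \<Rightarrow> real" where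
  "rho M \<delta> E \<tau> W = tauW M \<delta> E \<tau> W / real (card W)"

definition OPT :: "('m \<times> 'm) list \<Rightarrow> real \<Rightarrow> 'v tedge set \<Rightarrow> ('v tedge list \<Rightarrow> real) \<Rightarrow> 'v set \<Rightarrow> real" where
  "OPT M \<delta> E \<tau> V = Max (rho M \<delta> E \<tau> ` {W. W \<subseteq> V \<and> W \<noteq> {}})"

definition tauhat :: "nat \<Rightarrow> 'v set \<Rightarrow> ('v \<Rightarrow> real) \<Rightarrow> real" where
  "tauhat k W c = (\<Sum>w \<in> W. c w) / real k"

definition Lset :: "nat \<Rightarrow> real \<Rightarrow> 'v set \<Rightarrow> ('v \<Rightarrow> real) \<Rightarrow> 'v set" where
  "Lset k \<xi> W c = {w \<in> W. c w \<le> real k * (1 + \<xi>) * tauhat k W c / real (card W)}"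

text \<open>Wseq k xi V h i is the paper's W_{i+1}, where h ! j are the estimates of
  iteration j+1 (so Wseq .. 0 = W_1 = V).\<close>
fun Wseq :: "nat \<Rightarrow> real \<Rightarrow> 'v set \<Rightarrow> ('v \<Rightarrow> real) list \<Rightarrow> nat \<Rightarrow> 'v set" where
  "Wseq k \<xi> V h 0 = V"
| "Wseq k \<xi> V h (Suc i) = Wseq k \<xi> V h i - Lset k \<xi> (Wseq k \<xi> V h i) (h ! i)"

text \<open>Adaptive sampling: at step i, given the history h of all previous estimates,
  the estimates are drawn from D i h.\<close>
fun samp :: "(nat \<Rightarrow> 'a list \<Rightarrow> 'a pmf) \<Rightarrow> nat \<Rightarrow> 'a list \<Rightarrow> 'a list pmf" where
  "samp D 0 h = return_pmf h"
| "samp D (Suc n) h = bind_pmf (D (length h) h) (\<lambda>c. samp D n (h @ [c]))"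

inductive greedy_run :: "('v set \<Rightarrow> 'v \<Rightarrow> real) \<Rightarrow> nat \<Rightarrow> 'v set list \<Rightarrow> bool"
  for Cd k where
  stop: "card U \<le> k \<Longrightarrow> greedy_run Cd k [U]"
| step: "k < card U \<Longrightarrow> v \<in> U \<Longrightarrow> (\<forall>u \<in> U. Cd U v \<le> Cd U u) \<Longrightarrow>
         greedy_run Cd k ((U - {v}) # us) \<Longrightarrow> greedy_run Cd k (U # (U - {v}) # us)"

text \<open>W is a possible output of HybridPeel given the estimate history h
  (over all tie-breaking choices).\<close>
definition hybrid_output ::
  "('m \<times> 'm) list \<Rightarrow> real \<Rightarrow> 'v tedge set \<Rightarrow> ('v tedge list \<Rightarrow> real) \<Rightarrow> real \<Rightarrow> nat \<Rightarrow>
   'v set \<Rightarrow> ('v \<Rightarrow> real) list \<Rightarrow> 'v set \<Rightarrow> bool" where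
  "hybrid_output M \<delta> E \<tau> \<xi> J V h W \<longleftrightarrow>
    (let k = mk M;
         Ws = Wseq k \<xi> V h;
         peel = {(Ws j, tauhat k (Ws j) (h ! j) / real (card (Ws j))) | j. j < J \<and> Ws j \<noteq> {}}
     in \<exists>G. (if Ws J = {} then G = {}
             else (\<exists>us W'. greedy_run (mdeg M \<delta> E \<tau>) k us \<and> hd us = Ws J \<and>
                     W' \<in> set us \<and> (\<forall>U \<in> set us. rho M \<delta> E \<tau> U \<le> rho M \<delta> E \<tau> W') \<and>
                     G = {(W', rho M \<delta> E \<tau> W')})) \<and>
           (\<exists>s. (W, s) \<in> peel \<union> G \<and> (\<forall>(W2, s2) \<in> peel \<union> G. s2 \<le> s)))"

end

theory Submission
  imports Defs
begin

lemma finite_instances: "finite E \<Longrightarrow> finite (instances M \<delta> E W)"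
proof -
  assume f: "finite E"
  have "instances M \<delta> E W \<subseteq> {xs. set xs \<subseteq> E \<and> length xs = length M}"
    by (auto simp: instances_def is_instance_def induced_def)
  thus ?thesis using finite_lists_length_eq[OF f] finite_subset by blast
qed

lemma inst_E: "S \<in> instances M \<delta> E W \<Longrightarrow> is_instance M \<delta> E S"
  by (auto simp: instances_def is_instance_def induced_def)

lemma inst_verts_sub: "S \<in> instances M \<delta> E W \<Longrightarrow> inst_vertices S \<subseteq> W"
  by (force simp: instances_def is_instance_def induced_def inst_vertices_def)

lemma inst_card: "S \<in> instances M \<delta> E W \<Longrightarrow> card (inst_vertices S) = mk M"
  by (auto simp: instances_def is_instance_def intro: bij_betw_same_card)

lemma inst_in_sub: "S \<in> instances M \<delta> E W \<Longrightarrow> inst_vertices S \<subseteq> W' \<Longrightarrow> S \<in> instances M \<delta> E W'"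
proof -
  assume a: "S \<in> instances M \<delta> E W" "inst_vertices S \<subseteq> W'"
  have "set S \<subseteq> induced E W'"
  proof
    fix e assume e: "e \<in> set S"
    obtain u v t where et: "e = (u,v,t)" by (cases e) auto
    have "u \<in> inst_vertices S" "v \<in> inst_vertices S"
      using e et by (force simp: inst_vertices_def)+
    moreover have "e \<in> E" using a(1) e by (auto simp: instances_def is_instance_def induced_def)
    ultimately show "e \<in> induced E W'" using a(2) et by (auto simp: induced_def)
  qed
  thus ?thesis using a(1) by (auto simp: instances_def is_instance_def)
qed

lemma inst_mono: "W \<subseteq> W' \<Longrightarrow> S \<in> instances M \<delta> E W \<Longrightarrow> S \<in> instances M \<delta> E W'"
proof -
  assume a: "W \<subseteq> W'" and b: "S \<in> instances M \<delta> E W"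
  have "inst_vertices S \<subseteq> W'" using inst_verts_sub[OF b] a by (rule order_trans)
  thus ?thesis by (rule inst_in_sub[OF b])
qed

lemma tau_pos_inst: "\<forall>S. is_instance M \<delta> E S \<longrightarrow> \<tau> S > 0 \<Longrightarrow> S \<in> instances M \<delta> E W \<Longrightarrow> \<tau> S > 0"
proof -
  assume a: "\<forall>S. is_instance M \<delta> E S \<longrightarrow> \<tau> S > 0" and b: "S \<in> instances M \<delta> E W"
  show ?thesis using a inst_E[OF b] by simp
qed

lemma tauW_nonneg: "\<forall>S. is_instance M \<delta> E S \<longrightarrow> \<tau> S > 0 \<Longrightarrow> tauW M \<delta> E \<tau> W \<ge> 0"
  unfolding tauW_def by (rule sum_nonneg, rule less_imp_le, erule tau_pos_inst) assumption

lemma mdeg_nonneg: assumes "\<forall>S. is_instance M \<delta> E S \<longrightarrow> \<tau> S > 0" shows "mdeg M \<delta> E \<tau> W v \<ge> 0"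
  unfolding mdeg_def
proof (rule sum_nonneg)
  fix S assume "S \<in> {S \<in> instances M \<delta> E W. v \<in> inst_vertices S}"
  hence "S \<in> instances M \<delta> E W" by simp
  thus "0 \<le> \<tau> S" using tau_pos_inst[OF assms] less_imp_le by blast
qed

lemma rho_nonneg: "\<forall>S. is_instance M \<delta> E S \<longrightarrow> \<tau> S > 0 \<Longrightarrow> rho M \<delta> E \<tau> W \<ge> 0"
  unfolding rho_def by (intro divide_nonneg_nonneg tauW_nonneg) auto

lemma tauW_mono:
  assumes "finite E" "\<forall>S. is_instance M \<delta> E S \<longrightarrow> \<tau> S > 0" "W \<subseteq> W'"
  shows "tauW M \<delta> E \<tau> W \<le> tauW M \<delta> E \<tau> W'"
  unfolding tauW_def
  by (rule sum_mono2[OF finite_instances[OF assms(1)]])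
     (use inst_mono[OF assms(3)] tau_pos_inst[OF assms(2)] in \<open>auto intro: less_imp_le\<close>)

lemma mdeg_mono:
  assumes "finite E" "\<forall>S. is_instance M \<delta> E S \<longrightarrow> \<tau> S > 0" "W \<subseteq> W'"
  shows "mdeg M \<delta> E \<tau> W v \<le> mdeg M \<delta> E \<tau> W' v"
  unfolding mdeg_def
proof (rule sum_mono2)
  show "finite {S \<in> instances M \<delta> E W'. v \<in> inst_vertices S}"
    by (rule finite_subset[OF _ finite_instances[OF assms(1)]]) auto
  show "{S \<in> instances M \<delta> E W. v \<in> inst_vertices S} \<subseteq> {S \<in> instances M \<delta> E W'. v \<in> inst_vertices S}"
    using inst_mono[OF assms(3)] by blast
  fix S assume "S \<in> {S \<in> instances M \<delta> E W'. v \<in> inst_vertices S} - {S \<in> instances M \<delta> E W. v \<in> inst_vertices S}"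
  hence "S \<in> instances M \<delta> E W'" by simp
  thus "0 \<le> \<tau> S" using tau_pos_inst[OF assms(2)] less_imp_le by blast
qed

lemma deg_sum:
  assumes "finite E" "finite W"
  shows "(\<Sum>w\<in>W. mdeg M \<delta> E \<tau> W w) = real (mk M) * tauW M \<delta> E \<tau> W"
proof -
  let ?I = "instances M \<delta> E W"
  have "(\<Sum>w\<in>W. mdeg M \<delta> E \<tau> W w) = (\<Sum>w\<in>W. \<Sum>S\<in>{S. S \<in> ?I \<and> w \<in> inst_vertices S}. \<tau> S)"
    by (simp add: mdeg_def)
  also have "\<dots> = (\<Sum>S\<in>?I. \<Sum>w\<in>{w. w \<in> W \<and> w \<in> inst_vertices S}. \<tau> S)"
    by (rule sum.swap_restrict[OF assms(2) finite_instances[OF assms(1)]])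
  also have "\<dots> = (\<Sum>S\<in>?I. real (mk M) * \<tau> S)"
  proof (rule sum.cong[OF refl])
    fix S assume S: "S \<in> ?I"
    have "{w. w \<in> W \<and> w \<in> inst_vertices S} = inst_vertices S"
      using inst_verts_sub[OF S] by auto
    thus "(\<Sum>w\<in>{w. w \<in> W \<and> w \<in> inst_vertices S}. \<tau> S) = real (mk M) * \<tau> S"
      using inst_card[OF S] by simp
  qed
  also have "\<dots> = real (mk M) * tauW M \<delta> E \<tau> W"
    by (simp add: tauW_def sum_distrib_left)
  finally show ?thesis .
qed

lemma tauW_remove:
  assumes "finite E" "v \<in> W"
  shows "tauW M \<delta> E \<tau> W = tauW M \<delta> E \<tau> (W - {v}) + mdeg M \<delta> E \<tau> W v"
proof -
  let ?I = "instances M \<delta> E W"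
  have eq: "instances M \<delta> E (W - {v}) = {S \<in> ?I. v \<notin> inst_vertices S}"
  proof
    show "instances M \<delta> E (W - {v}) \<subseteq> {S \<in> ?I. v \<notin> inst_vertices S}"
    proof
      fix S assume S: "S \<in> instances M \<delta> E (W - {v})"
      have "S \<in> ?I" by (rule inst_mono[OF _ S]) auto
      moreover have "v \<notin> inst_vertices S" using inst_verts_sub[OF S] by auto
      ultimately show "S \<in> {S \<in> ?I. v \<notin> inst_vertices S}" by simp
    qed
    show "{S \<in> ?I. v \<notin> inst_vertices S} \<subseteq> instances M \<delta> E (W - {v})"
    proof
      fix S assume S: "S \<in> {S \<in> ?I. v \<notin> inst_vertices S}"
      hence "inst_vertices S \<subseteq> W - {v}" using inst_verts_sub[of S M \<delta> E W] by auto
      thus "S \<in> instances M \<delta> E (W - {v})" using inst_in_sub S by blast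
    qed
  qed
  have u: "{S \<in> ?I. v \<notin> inst_vertices S} \<union> {S \<in> ?I. v \<in> inst_vertices S} = ?I" by blast
  have fI: "finite ?I" by (rule finite_instances[OF assms(1)])
  have "(\<Sum>S\<in>{S \<in> ?I. v \<notin> inst_vertices S} \<union> {S \<in> ?I. v \<in> inst_vertices S}. \<tau> S) = (\<Sum>S\<in>{S \<in> ?I. v \<notin> inst_vertices S}. \<tau> S) + (\<Sum>S\<in>{S \<in> ?I. v \<in> inst_vertices S}. \<tau> S)"
    by (rule sum.union_disjoint) (use fI in auto)
  hence "tauW M \<delta> E \<tau> W = (\<Sum>S\<in>{S \<in> ?I. v \<notin> inst_vertices S}. \<tau> S) + (\<Sum>S\<in>{S \<in> ?I. v \<in> inst_vertices S}. \<tau> S)"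
    unfolding tauW_def u .
  thus ?thesis by (simp add: eq tauW_def mdeg_def)
qed


lemma OPT_ge:
  assumes "finite V" "W \<subseteq> V" "W \<noteq> {}"
  shows "rho M \<delta> E \<tau> W \<le> OPT M \<delta> E \<tau> V"
proof -
  have f: "finite {W. W \<subseteq> V \<and> W \<noteq> {}}" using assms(1) by (rule finite_subset[rotated, OF finite_Pow_iff[THEN iffD2]]) auto
  show ?thesis unfolding OPT_def using assms by (intro Max_ge finite_imageI f) auto
qed

lemma OPT_attained:
  assumes "finite V" "V \<noteq> {}"
  shows "\<exists>W. W \<subseteq> V \<and> W \<noteq> {} \<and> rho M \<delta> E \<tau> W = OPT M \<delta> E \<tau> V"
proof -
  have "OPT M \<delta> E \<tau> V \<in> rho M \<delta> E \<tau> ` {W. W \<subseteq> V \<and> W \<noteq> {}}"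
  proof -
    have f: "finite {W. W \<subseteq> V \<and> W \<noteq> {}}" using assms(1) by (rule finite_subset[rotated, OF finite_Pow_iff[THEN iffD2]]) auto
    have "V \<in> {W. W \<subseteq> V \<and> W \<noteq> {}}" using assms by auto
    thus ?thesis unfolding OPT_def by (intro Max_in finite_imageI f) blast
  qed
  then obtain W where W: "W \<in> {W. W \<subseteq> V \<and> W \<noteq> {}}" "OPT M \<delta> E \<tau> V = rho M \<delta> E \<tau> W"
    by (rule imageE)
  show ?thesis by (rule exI[of _ W]) (use W in simp)
qed

lemma deg_opt:
  assumes fE: "finite E" and fV: "finite V" and tp: "\<forall>S. is_instance M \<delta> E S \<longrightarrow> \<tau> S > 0"
    and mx: "\<And>W. W \<subseteq> V \<Longrightarrow> W \<noteq> {} \<Longrightarrow> rho M \<delta> E \<tau> W \<le> rho M \<delta> E \<tau> Wo"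
    and Wo: "Wo \<subseteq> V" "v \<in> Wo" and k2: "mk M \<ge> 2"
  shows "mdeg M \<delta> E \<tau> Wo v \<ge> rho M \<delta> E \<tau> Wo"
proof (cases "Wo - {v} = {}")
  case True
  hence Wv: "Wo = {v}" using Wo by auto
  have "instances M \<delta> E Wo = {}"
  proof (rule ccontr)
    assume "instances M \<delta> E Wo \<noteq> {}"
    then obtain S where S: "S \<in> instances M \<delta> E Wo" by auto
    have "card (inst_vertices S) \<le> card Wo"
      using inst_verts_sub[OF S] Wo fV by (intro card_mono) (auto intro: finite_subset)
    thus False using inst_card[OF S] Wv k2 by simp
  qed
  hence "rho M \<delta> E \<tau> Wo = 0" by (simp add: rho_def tauW_def)
  thus ?thesis using mdeg_nonneg[OF tp] by simp
next
  case False
  have fW: "finite Wo" using Wo fV finite_subset by blast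
  let ?n = "real (card Wo)"
  have n1: "card Wo \<ge> 2"
  proof -
    obtain u where "u \<in> Wo" "u \<noteq> v" using False by auto
    hence "{u, v} \<subseteq> Wo" using Wo by auto
    from card_mono[OF fW this] show ?thesis using \<open>u \<noteq> v\<close> by simp
  qed
  have c1: "card (Wo - {v}) = card Wo - 1" using Wo by simp
  have "rho M \<delta> E \<tau> (Wo - {v}) \<le> rho M \<delta> E \<tau> Wo" using Wo False by (intro mx) auto
  hence "tauW M \<delta> E \<tau> (Wo - {v}) / (?n - 1) \<le> tauW M \<delta> E \<tau> Wo / ?n"
    using c1 n1 by (simp add: rho_def of_nat_diff)
  moreover have "tauW M \<delta> E \<tau> (Wo - {v}) = tauW M \<delta> E \<tau> Wo - mdeg M \<delta> E \<tau> Wo v"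
    using tauW_remove[OF fE Wo(2), of M \<delta> \<tau>] by simp
  ultimately have "(tauW M \<delta> E \<tau> Wo - mdeg M \<delta> E \<tau> Wo v) * ?n \<le> tauW M \<delta> E \<tau> Wo * (?n - 1)"
    using n1 by (simp add: divide_le_eq le_divide_eq field_simps)
  hence "tauW M \<delta> E \<tau> Wo \<le> mdeg M \<delta> E \<tau> Wo v * ?n" by (simp add: algebra_simps)
  thus ?thesis using n1 by (simp add: rho_def divide_le_eq mult.commute)
qed

lemma greedy_bound:
  assumes gr: "greedy_run (mdeg M \<delta> E \<tau>) (mk M) us"
    and fE: "finite E" and fV: "finite V" and tp: "\<forall>S. is_instance M \<delta> E S \<longrightarrow> \<tau> S > 0"
    and mx: "\<And>W. W \<subseteq> V \<Longrightarrow> W \<noteq> {} \<Longrightarrow> rho M \<delta> E \<tau> W \<le> rho M \<delta> E \<tau> Wo"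
    and Wo: "Wo \<subseteq> V" "Wo \<noteq> {}" and k2: "mk M \<ge> 2"
  shows "hd us \<subseteq> V \<Longrightarrow> Wo \<subseteq> hd us \<Longrightarrow> \<exists>U\<in>set us. rho M \<delta> E \<tau> U \<ge> rho M \<delta> E \<tau> Wo / real (mk M)"
  using gr
proof (induction us rule: greedy_run.induct)
  case (stop U)
  have fU: "finite U" using stop fV finite_subset by auto
  have O0: "rho M \<delta> E \<tau> Wo \<ge> 0" using rho_nonneg[OF tp] .
  have "U \<noteq> {}" using stop(3) Wo(2) by auto
  hence cU: "card U > 0" using fU by (simp add: card_gt_0_iff)
  have cWo: "card Wo \<ge> 1" using Wo fV finite_subset by (metis One_nat_def Suc_leI card_gt_0_iff)
  have t1: "tauW M \<delta> E \<tau> Wo \<le> tauW M \<delta> E \<tau> U" using tauW_mono[OF fE tp stop(3)] by simp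
  have t0: "tauW M \<delta> E \<tau> Wo \<ge> 0" using tauW_nonneg[OF tp] .
  have "rho M \<delta> E \<tau> Wo = tauW M \<delta> E \<tau> Wo / real (card Wo)" by (simp add: rho_def)
  also have "\<dots> \<le> tauW M \<delta> E \<tau> Wo"
  proof -
    have n1: "real (card Wo) \<ge> 1" using cWo by simp
    have "tauW M \<delta> E \<tau> Wo * 1 \<le> tauW M \<delta> E \<tau> Wo * real (card Wo)" by (rule mult_left_mono[OF n1 t0])
    thus ?thesis using n1 by (simp add: divide_le_eq)
  qed
  finally have a: "rho M \<delta> E \<tau> Wo / real (mk M) \<le> tauW M \<delta> E \<tau> Wo / real (mk M)"
    using k2 by (simp add: divide_right_mono)
  also have "\<dots> \<le> tauW M \<delta> E \<tau> U / real (mk M)" using t1 k2 by (simp add: divide_right_mono)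
  also have "\<dots> \<le> tauW M \<delta> E \<tau> U / real (card U)"
    using stop(1) cU t0 t1 by (intro divide_left_mono) auto
  finally show ?case by (auto simp: rho_def)
next
  case (step U v us)
  show ?case
  proof (cases "v \<in> Wo")
    case False
    hence "Wo \<subseteq> hd ((U - {v}) # us)" using step by auto
    moreover have "hd ((U - {v}) # us) \<subseteq> V" using step by auto
    ultimately show ?thesis using step.IH by auto
  next
    case True
    have fU: "finite U" using step fV finite_subset by auto
    have cU: "card U > 0" using step(1) by simp
    have "\<forall>u\<in>U. mdeg M \<delta> E \<tau> U u \<ge> rho M \<delta> E \<tau> Wo"
    proof
      fix u assume u: "u \<in> U"
      have "rho M \<delta> E \<tau> Wo \<le> mdeg M \<delta> E \<tau> Wo v" using deg_opt[OF fE fV tp mx Wo(1) True k2] .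
      also have "\<dots> \<le> mdeg M \<delta> E \<tau> U v" using mdeg_mono[OF fE tp] step by auto
      also have "\<dots> \<le> mdeg M \<delta> E \<tau> U u" using step(3) u by auto
      finally show "mdeg M \<delta> E \<tau> U u \<ge> rho M \<delta> E \<tau> Wo" .
    qed
    hence "(\<Sum>u\<in>U. rho M \<delta> E \<tau> Wo) \<le> (\<Sum>u\<in>U. mdeg M \<delta> E \<tau> U u)" by (intro sum_mono) auto
    hence "real (card U) * rho M \<delta> E \<tau> Wo \<le> real (mk M) * tauW M \<delta> E \<tau> U"
      using deg_sum[OF fE fU, of M \<delta> \<tau>] by simp
    hence "rho M \<delta> E \<tau> Wo / real (mk M) \<le> tauW M \<delta> E \<tau> U / real (card U)"
      using cU k2 by (simp add: field_simps)
    thus ?thesis by (auto simp: rho_def)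
  qed
qed

lemma Wseq_sub: "Wseq k \<xi> V h i \<subseteq> V"
  by (induction i) auto

lemma Wseq_cong: "(\<And>j. j < i \<Longrightarrow> h ! j = h' ! j) \<Longrightarrow> Wseq k \<xi> V h i = Wseq k \<xi> V h' i"
  by (induction i) auto

lemma Wseq_chain: "Wo \<subseteq> V \<Longrightarrow> (\<forall>i\<le>n. Wo \<subseteq> Wseq k \<xi> V h i) \<or> (\<exists>i<n. Wo \<subseteq> Wseq k \<xi> V h i \<and> \<not> Wo \<subseteq> Wseq k \<xi> V h (Suc i))"
proof (induction n)
  case 0 thus ?case by auto
next
  case (Suc n)
  from Suc.IH[OF Suc.prems] show ?case
  proof
    assume a: "\<forall>i\<le>n. Wo \<subseteq> Wseq k \<xi> V h i"
    show ?case
    proof (cases "Wo \<subseteq> Wseq k \<xi> V h (Suc n)")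
      case True thus ?thesis using a le_Suc_eq by auto
    next
      case False thus ?thesis using a by auto
    qed
  next
    assume "\<exists>i<n. Wo \<subseteq> Wseq k \<xi> V h i \<and> \<not> Wo \<subseteq> Wseq k \<xi> V h (Suc i)"
    thus ?case using less_Suc_eq by auto
  qed
qed


definition good where
  "good M \<delta> E \<tau> \<xi> \<epsilon> V i h \<longleftrightarrow> (\<forall>w\<in>Wseq (mk M) \<xi> V h i.
     \<bar>(h ! i) w - mdeg M \<delta> E \<tau> (Wseq (mk M) \<xi> V h i) w\<bar> \<le> \<epsilon> * mdeg M \<delta> E \<tau> (Wseq (mk M) \<xi> V h i) w)"

lemma det:
  assumes net: "temporal_network V E" and Vne: "V \<noteq> {}"
    and mot: "temporal_motif M"
    and tp: "\<forall>S. is_instance M \<delta> E S \<longrightarrow> \<tau> S > 0"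
    and xi: "\<xi> > 0" and eps: "0 < \<epsilon>" "\<epsilon> < 1"
    and J: "J \<ge> 1"
    and hg: "\<forall>i<J. good M \<delta> E \<tau> \<xi> \<epsilon> V i h"
    and out: "hybrid_output M \<delta> E \<tau> \<xi> J V h W"
  shows "rho M \<delta> E \<tau> W \<ge>
                   (if J \<ge> 2 then (1 - \<epsilon>)^2 / (real (mk M) * (1 + \<xi>) * (1 + \<epsilon>)^2)
                    else (1 - \<epsilon>)^2 / (real (mk M) * (1 + \<xi>) * (1 + \<epsilon>))) * OPT M \<delta> E \<tau> V"
proof -
  define k where "k = mk M"
  define Ws where "Ws = Wseq k \<xi> V h"
  define C where "C = mdeg M \<delta> E \<tau>"
  define Opt where "Opt = OPT M \<delta> E \<tau> V"
  have fE: "finite E" and fV: "finite V" using net by (auto simp: temporal_network_def)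
  have k2: "k \<ge> 2" using mot by (simp add: temporal_motif_def k_def)
  hence kpos: "real k > 0" by simp
  obtain Wo where Wo: "Wo \<subseteq> V" "Wo \<noteq> {}" "rho M \<delta> E \<tau> Wo = Opt"
    using OPT_attained[OF fV Vne, of M \<delta> E \<tau>] unfolding Opt_def by blast
  have mx: "\<And>W. W \<subseteq> V \<Longrightarrow> W \<noteq> {} \<Longrightarrow> rho M \<delta> E \<tau> W \<le> rho M \<delta> E \<tau> Wo"
  proof -
    fix W assume "W \<subseteq> V" "W \<noteq> {}"
    thus "rho M \<delta> E \<tau> W \<le> rho M \<delta> E \<tau> Wo" using OPT_ge[OF fV, of W M \<delta> E \<tau>] Wo(3) Opt_def by simp
  qed
  have O0: "Opt \<ge> 0" using rho_nonneg[OF tp] Wo by metis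
  have WsV: "\<And>i. Ws i \<subseteq> V" using Wseq_sub Ws_def by metis
  define m1 where "m1 = (1 - \<epsilon>) * Opt / (real k * (1 + \<xi>))"
  have m1O: "m1 \<le> Opt / real k"
  proof -
    have "(1 - \<epsilon>) / (1 + \<xi>) \<le> 1" using xi eps by simp
    hence "(1 - \<epsilon>) / (1 + \<xi>) * (Opt / real k) \<le> 1 * (Opt / real k)"
      using O0 kpos by (intro mult_right_mono) auto
    thus ?thesis by (simp add: m1_def mult.commute)
  qed
  have m10: "m1 \<ge> 0" using O0 eps xi kpos by (simp add: m1_def)
  define peel where "peel = {(Ws j, tauhat k (Ws j) (h ! j) / real (card (Ws j))) | j. j < J \<and> Ws j \<noteq> {}}"
  from out obtain G s where
    G: "(if Ws J = {} then G = {}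
             else (\<exists>us W'. greedy_run C k us \<and> hd us = Ws J \<and>
                     W' \<in> set us \<and> (\<forall>U \<in> set us. rho M \<delta> E \<tau> U \<le> rho M \<delta> E \<tau> W') \<and>
                     G = {(W', rho M \<delta> E \<tau> W')}))"
    and Ws: "(W, s) \<in> peel \<union> G" and smax: "\<forall>(W2, s2) \<in> peel \<union> G. s2 \<le> s"
    unfolding hybrid_output_def Let_def peel_def Ws_def k_def C_def by blast
  have smax': "\<And>W2 s2. (W2, s2) \<in> peel \<union> G \<Longrightarrow> s2 \<le> s" using smax by blast
  have est: "\<And>i w. i < J \<Longrightarrow> w \<in> Ws i \<Longrightarrow> \<bar>(h ! i) w - C (Ws i) w\<bar> \<le> \<epsilon> * C (Ws i) w"
    using hg unfolding good_def Ws_def C_def k_def by blast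
  have s_ge: "s \<ge> m1"
  proof -
    from Wseq_chain[OF Wo(1), of J k \<xi> h]
    have "(\<forall>i\<le>J. Wo \<subseteq> Ws i) \<or> (\<exists>i<J. Wo \<subseteq> Ws i \<and> \<not> Wo \<subseteq> Ws (Suc i))"
      unfolding Ws_def .
    thus ?thesis
    proof
      assume a: "\<forall>i\<le>J. Wo \<subseteq> Ws i"
      hence WJ: "Wo \<subseteq> Ws J" by auto
      hence ne: "Ws J \<noteq> {}" using Wo by auto
      then obtain us W' where g: "greedy_run C k us" "hd us = Ws J" "W' \<in> set us"
        "\<forall>U \<in> set us. rho M \<delta> E \<tau> U \<le> rho M \<delta> E \<tau> W'" "G = {(W', rho M \<delta> E \<tau> W')}"
        using G by auto
      obtain U where U: "U \<in> set us" "rho M \<delta> E \<tau> U \<ge> rho M \<delta> E \<tau> Wo / real (mk M)"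
        using greedy_bound[of M \<delta> E \<tau> us, OF _ fE fV tp mx Wo(1,2)] g(1,2) WJ WsV k2
        unfolding C_def k_def by metis
      have "m1 \<le> rho M \<delta> E \<tau> W'" using U g(4) m1O Wo(3) k_def by force
      also have "\<dots> \<le> s" using smax'[of W' "rho M \<delta> E \<tau> W'"] g(5) by simp
      finally show ?thesis .
    next
      assume "\<exists>i<J. Wo \<subseteq> Ws i \<and> \<not> Wo \<subseteq> Ws (Suc i)"
      then obtain i w where i: "i < J" "Wo \<subseteq> Ws i" "w \<in> Wo" "w \<notin> Ws (Suc i)" by blast
      have wW: "w \<in> Ws i" using i by auto
      hence wL: "w \<in> Lset k \<xi> (Ws i) (h ! i)" using i(4) unfolding Ws_def by auto
      have ne: "Ws i \<noteq> {}" using wW by auto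
      have fWi: "finite (Ws i)" using WsV fV finite_subset by blast
      have cpos: "real (card (Ws i)) > 0" using ne fWi by (simp add: card_gt_0_iff)
      define th where "th = tauhat k (Ws i) (h ! i) / real (card (Ws i))"
      have le1: "(h ! i) w \<le> real k * (1 + \<xi>) * th"
        using wL unfolding Lset_def th_def by simp
      have "Opt \<le> C Wo w" using deg_opt[OF fE fV tp mx Wo(1) i(3)] k2 Wo(3) unfolding C_def k_def by simp
      also have "\<dots> \<le> C (Ws i) w" using mdeg_mono[OF fE tp i(2)] C_def by simp
      finally have "(1 - \<epsilon>) * Opt \<le> (1 - \<epsilon>) * C (Ws i) w" using eps by simp
      also have "\<dots> \<le> (h ! i) w" using est[OF i(1) wW] by (simp add: algebra_simps abs_le_iff)
      finally have "(1 - \<epsilon>) * Opt \<le> real k * (1 + \<xi>) * th" using le1 by simp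
      hence "m1 \<le> th" unfolding m1_def using kpos xi by (simp add: divide_le_eq mult.commute mult.left_commute)
      moreover have "(Ws i, th) \<in> peel" unfolding peel_def th_def using i(1) ne by blast
      ultimately show ?thesis using smax'[of "Ws i" th] by simp
    qed
  qed
  define LB where "LB = m1 / (1 + \<epsilon>)"
  have rhoW: "rho M \<delta> E \<tau> W \<ge> LB"
    using Ws
  proof
    assume "(W, s) \<in> peel"
    then obtain j where j: "j < J" "Ws j \<noteq> {}" "W = Ws j" "s = tauhat k (Ws j) (h ! j) / real (card (Ws j))"
      unfolding peel_def by auto
    have fWj: "finite (Ws j)" using WsV fV finite_subset by blast
    have cpos: "real (card (Ws j)) > 0" using j fWj by (simp add: card_gt_0_iff)
    have "(\<Sum>w\<in>Ws j. (h ! j) w) \<le> (\<Sum>w\<in>Ws j. (1 + \<epsilon>) * C (Ws j) w)"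
      using est[OF j(1)] by (intro sum_mono) (force simp: algebra_simps abs_le_iff)
    also have "\<dots> = (1 + \<epsilon>) * (real k * tauW M \<delta> E \<tau> (Ws j))"
      using deg_sum[OF fE fWj, of M \<delta> \<tau>] by (simp add: sum_distrib_left[symmetric] C_def k_def)
    finally have "tauhat k (Ws j) (h ! j) \<le> (1 + \<epsilon>) * tauW M \<delta> E \<tau> (Ws j)"
      using kpos by (simp add: tauhat_def divide_le_eq mult.commute mult.left_commute)
    hence "s \<le> (1 + \<epsilon>) * rho M \<delta> E \<tau> W"
      using j cpos by (simp add: rho_def divide_right_mono mult.commute)
    hence "m1 \<le> (1 + \<epsilon>) * rho M \<delta> E \<tau> W" using s_ge by simp
    thus ?thesis unfolding LB_def using eps by (simp add: divide_le_eq mult.commute)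
  next
    assume a: "(W, s) \<in> G"
    hence "Ws J \<noteq> {}" using G by (auto split: if_splits)
    hence "s = rho M \<delta> E \<tau> W" using G a by auto
    hence "m1 \<le> rho M \<delta> E \<tau> W" using s_ge by simp
    moreover have "LB \<le> m1"
    proof -
      have "m1 * 1 \<le> m1 * (1 + \<epsilon>)" using m10 eps by (intro mult_left_mono) auto
      thus ?thesis unfolding LB_def using eps by (simp add: divide_le_eq)
    qed
    ultimately show ?thesis by simp
  qed
  have cle: "(if J \<ge> 2 then (1 - \<epsilon>)^2 / (real (mk M) * (1 + \<xi>) * (1 + \<epsilon>)^2)
                    else (1 - \<epsilon>)^2 / (real (mk M) * (1 + \<xi>) * (1 + \<epsilon>))) \<le> (1 - \<epsilon>) / (real k * (1 + \<xi>) * (1 + \<epsilon>))"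
  proof -
    have b: "(1 - \<epsilon>)^2 / (real k * (1 + \<xi>) * (1 + \<epsilon>)) \<le> (1 - \<epsilon>) / (real k * (1 + \<xi>) * (1 + \<epsilon>))"
      using eps xi kpos by (intro divide_right_mono) (auto simp: power2_eq_square)
    have "(1 - \<epsilon>)^2 / (real k * (1 + \<xi>) * (1 + \<epsilon>)^2) \<le> (1 - \<epsilon>)^2 / (real k * (1 + \<xi>) * (1 + \<epsilon>))"
      using eps xi kpos by (intro divide_left_mono mult_left_mono) (auto simp: power2_eq_square)
    thus ?thesis using b k_def by auto
  qed
  have "LB = (1 - \<epsilon>) / (real k * (1 + \<xi>) * (1 + \<epsilon>)) * Opt"
    unfolding LB_def m1_def by (simp add: field_simps)
  thus ?thesis using rhoW cle O0 Opt_def mult_right_mono[OF cle O0] by (simp add: k_def)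
qed


lemma samp_support: "h \<in> set_pmf (samp D n h0) \<Longrightarrow> take (length h0) h = h0 \<and> length h = length h0 + n"
proof (induction n arbitrary: h0)
  case 0 thus ?case by simp
next
  case (Suc n)
  then obtain c where c: "h \<in> set_pmf (samp D n (h0 @ [c]))" by auto
  from Suc.IH[OF c] have "take (Suc (length h0)) h = h0 @ [c]" "length h = Suc (length h0) + n" by auto
  moreover hence "take (length h0) h = h0"
    by (metis append_eq_conv_conj length_append_singleton lessI less_imp_le_nat take_take min_absorb1)
  ultimately show ?case by simp
qed

lemma samp_add: "samp D (m + n) h = bind_pmf (samp D m h) (\<lambda>h'. samp D n h')"
  by (induction m arbitrary: h) (simp_all add: bind_assoc_pmf bind_return_pmf)

lemma samp_snoc_support:
  assumes "h0 \<in> set_pmf (samp D m [])" "c \<in> set_pmf (D (length h0) h0)"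
  shows "h0 @ [c] \<in> set_pmf (samp D (Suc m) [])"
proof -
  have "samp D (Suc m) [] = bind_pmf (samp D m []) (\<lambda>h'. samp D 1 h')"
    using samp_add[of D m 1 "[]"] by simp
  thus ?thesis using assms by (auto simp: bind_return_pmf)
qed

lemma good_cong:
  assumes "\<And>j. j \<le> i \<Longrightarrow> h ! j = h' ! j"
  shows "good M \<delta> E \<tau> \<xi> \<epsilon> V i h = good M \<delta> E \<tau> \<xi> \<epsilon> V i h'"
proof -
  have "Wseq (mk M) \<xi> V h i = Wseq (mk M) \<xi> V h' i" by (rule Wseq_cong) (use assms in auto)
  thus ?thesis unfolding good_def using assms[of i] by simp
qed

lemma union_bound:
  assumes eta: "\<eta> \<ge> 0"
    and acc': "\<And>i h. i < J \<Longrightarrow> h \<in> set_pmf (samp D i []) \<Longrightarrow>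
       measure_pmf.prob (D i h) {c. good M \<delta> E \<tau> \<xi> \<epsilon> V i (h @ [c])} \<ge> 1 - \<eta> / real J"
  shows "length h0 + n \<le> J \<Longrightarrow> h0 \<in> set_pmf (samp D (length h0) []) \<Longrightarrow>
    emeasure (samp D n h0) {h. \<exists>i. length h0 \<le> i \<and> i < length h0 + n \<and> \<not> good M \<delta> E \<tau> \<xi> \<epsilon> V i h}
      \<le> ennreal (real n * (\<eta> / real J))"
proof (induction n arbitrary: h0)
  case 0 thus ?case by simp
next
  case (Suc n)
  define m where "m = length h0"
  define a where "a = real n * (\<eta> / real J)"
  have a0: "a \<ge> 0" using eta by (simp add: a_def)
  define B where "B = {h. \<exists>i. m \<le> i \<and> i < m + Suc n \<and> \<not> good M \<delta> E \<tau> \<xi> \<epsilon> V i h}"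
  define Good where "Good = {c. good M \<delta> E \<tau> \<xi> \<epsilon> V m (h0 @ [c])}"
  have pt: "emeasure (samp D n (h0 @ [c])) B \<le> ennreal a + indicator (- Good) c"
    if c: "c \<in> set_pmf (D m h0)" for c
  proof (cases "c \<in> Good")
    case False
    have "emeasure (samp D n (h0 @ [c])) B \<le> 1" by (rule measure_pmf.emeasure_le_1)
    also have "\<dots> \<le> ennreal a + indicator (- Good) c" using False by simp
    finally show ?thesis .
  next
    case True
    have sup: "h0 @ [c] \<in> set_pmf (samp D (length (h0 @ [c])) [])"
      using samp_snoc_support[OF Suc.prems(2) c[unfolded m_def]] by simp
    have IH: "emeasure (samp D n (h0 @ [c])) {h. \<exists>i. length (h0 @ [c]) \<le> i \<and> i < length (h0 @ [c]) + n \<and> \<not> good M \<delta> E \<tau> \<xi> \<epsilon> V i h}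
      \<le> ennreal a"
      unfolding a_def by (rule Suc.IH) (use Suc.prems(1) sup in auto)
    have "emeasure (samp D n (h0 @ [c])) B \<le> emeasure (samp D n (h0 @ [c])) {h. \<exists>i. length (h0 @ [c]) \<le> i \<and> i < length (h0 @ [c]) + n \<and> \<not> good M \<delta> E \<tau> \<xi> \<epsilon> V i h}"
    proof (rule emeasure_mono_AE)
      show "AE h in measure_pmf (samp D n (h0 @ [c])). h \<in> B \<longrightarrow> h \<in> {h. \<exists>i. length (h0 @ [c]) \<le> i \<and> i < length (h0 @ [c]) + n \<and> \<not> good M \<delta> E \<tau> \<xi> \<epsilon> V i h}"
      proof (rule AE_pmfI, rule impI)
        fix h assume hs: "h \<in> set_pmf (samp D n (h0 @ [c]))" and hB: "h \<in> B"
        from samp_support[OF hs] have tk: "take (Suc m) h = h0 @ [c]" and lh: "length h = Suc m + n"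
          by (auto simp: m_def)
        have "\<And>j. j \<le> m \<Longrightarrow> h ! j = (h0 @ [c]) ! j"
          using tk lh by (metis le_imp_less_Suc nth_take)
        hence "good M \<delta> E \<tau> \<xi> \<epsilon> V m h = good M \<delta> E \<tau> \<xi> \<epsilon> V m (h0 @ [c])" by (rule good_cong)
        hence gm: "good M \<delta> E \<tau> \<xi> \<epsilon> V m h" using True by (simp add: Good_def)
        from hB obtain i where i: "m \<le> i" "i < m + Suc n" "\<not> good M \<delta> E \<tau> \<xi> \<epsilon> V i h"
          unfolding B_def by blast
        have "i \<noteq> m" using gm i(3) by auto
        thus "h \<in> {h. \<exists>i. length (h0 @ [c]) \<le> i \<and> i < length (h0 @ [c]) + n \<and> \<not> good M \<delta> E \<tau> \<xi> \<epsilon> V i h}"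
          using i \<open>i \<noteq> m\<close> by (intro CollectI exI[of _ i]) (auto simp: m_def)
      qed
    qed simp
    also have "\<dots> \<le> ennreal a" by (rule IH)
    also have "\<dots> \<le> ennreal a + indicator (- Good) c" by simp
    finally show ?thesis .
  qed
  have "emeasure (samp D (Suc n) h0) B = (\<integral>\<^sup>+c. emeasure (samp D n (h0 @ [c])) B \<partial>measure_pmf (D m h0))"
    by (simp add: m_def)
  also have "\<dots> \<le> (\<integral>\<^sup>+c. (ennreal a + indicator (- Good) c) \<partial>measure_pmf (D m h0))"
    by (rule nn_integral_mono_AE) (use pt in \<open>auto intro: AE_pmfI\<close>)
  also have "\<dots> = ennreal a + emeasure (measure_pmf (D m h0)) (- Good)"
    by (subst nn_integral_add) (auto simp: measure_pmf.emeasure_space_1)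
  also have "emeasure (measure_pmf (D m h0)) (- Good) = ennreal (measure_pmf.prob (D m h0) (- Good))"
    by (simp add: measure_pmf.emeasure_eq_measure)
  also have "measure_pmf.prob (D m h0) (- Good) = 1 - measure_pmf.prob (D m h0) Good"
    using measure_pmf.prob_compl[of Good "D m h0"] by (simp add: Compl_eq_Diff_UNIV)
  also have "\<dots> \<le> \<eta> / real J"
    using acc'[of m h0] Suc.prems unfolding Good_def m_def by simp
  finally have "emeasure (samp D (Suc n) h0) B \<le> ennreal a + ennreal (\<eta> / real J)"
    by (simp add: ennreal_leI add_left_mono order_trans)
  also have "\<dots> = ennreal (real (Suc n) * (\<eta> / real J))"
    using a0 eta by (simp add: a_def algebra_simps add_divide_distrib ennreal_plus[symmetric] del: ennreal_plus)
  finally show ?case by (simp add: B_def m_def)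
qed

lemma union_bound0:
  assumes eta: "\<eta> \<ge> 0"
    and acc': "\<And>i h. i < J \<Longrightarrow> h \<in> set_pmf (samp D i []) \<Longrightarrow>
       measure_pmf.prob (D i h) {c. good M \<delta> E \<tau> \<xi> \<epsilon> V i (h @ [c])} \<ge> 1 - \<eta> / real J"
  shows "emeasure (samp D J []) {h. \<exists>i. i < J \<and> \<not> good M \<delta> E \<tau> \<xi> \<epsilon> V i h}
      \<le> ennreal (real J * (\<eta> / real J))"
  using union_bound[OF eta acc', of "[]" J] by simp

theorem theorem4p2:
  fixes V :: "'v set" and E :: "'v tedge set" and M :: "('m \<times> 'm) list"
    and \<delta> \<xi> \<epsilon> \<eta> :: real and \<tau> :: "'v tedge list \<Rightarrow> real" and J :: nat
    and D :: "nat \<Rightarrow> ('v \<Rightarrow> real) list \<Rightarrow> ('v \<Rightarrow> real) pmf"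
  assumes net: "temporal_network V E" and Vne: "V \<noteq> {}"
    and mot: "temporal_motif M" and dpos: "\<delta> > 0"
    and taupos: "\<forall>S. is_instance M \<delta> E S \<longrightarrow> \<tau> S > 0"
    and xi: "\<xi> > 0" and eps: "0 < \<epsilon>" "\<epsilon> < 1" and eta: "0 < \<eta>" "\<eta> < 1"
    and J: "J \<ge> 1"
    and nonneg: "\<And>i h c w. i < J \<Longrightarrow> h \<in> set_pmf (samp D i []) \<Longrightarrow> c \<in> set_pmf (D i h) \<Longrightarrow>
                   w \<in> Wseq (mk M) \<xi> V h i \<Longrightarrow> c w \<ge> 0"
    and acc: "\<And>i h. i < J \<Longrightarrow> h \<in> set_pmf (samp D i []) \<Longrightarrow>
                measure_pmf.prob (D i h)
                  {c. \<forall>w \<in> Wseq (mk M) \<xi> V h i.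
                        \<bar>c w - mdeg M \<delta> E \<tau> (Wseq (mk M) \<xi> V h i) w\<bar>
                          \<le> \<epsilon> * mdeg M \<delta> E \<tau> (Wseq (mk M) \<xi> V h i) w}
                \<ge> 1 - \<eta> / real J"
  shows "measure_pmf.prob (samp D J [])
           {h. \<forall>W. hybrid_output M \<delta> E \<tau> \<xi> J V h W \<longrightarrow>
                 rho M \<delta> E \<tau> W \<ge>
                   (if J \<ge> 2 then (1 - \<epsilon>)^2 / (real (mk M) * (1 + \<xi>) * (1 + \<epsilon>)^2)
                    else (1 - \<epsilon>)^2 / (real (mk M) * (1 + \<xi>) * (1 + \<epsilon>))) * OPT M \<delta> E \<tau> V}
         \<ge> 1 - \<eta>"
proof -
  let ?g = "good M \<delta> E \<tau> \<xi> \<epsilon> V"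
  have acc': "measure_pmf.prob (D i h) {c. ?g i (h @ [c])} \<ge> 1 - \<eta> / real J"
    if i: "i < J" and h: "h \<in> set_pmf (samp D i [])" for i h
  proof -
    have lh: "length h = i" using samp_support[OF h] by simp
    have "{c. ?g i (h @ [c])} = {c. \<forall>w \<in> Wseq (mk M) \<xi> V h i.
                        \<bar>c w - mdeg M \<delta> E \<tau> (Wseq (mk M) \<xi> V h i) w\<bar>
                          \<le> \<epsilon> * mdeg M \<delta> E \<tau> (Wseq (mk M) \<xi> V h i) w}"
    proof -
      have "\<And>c. Wseq (mk M) \<xi> V (h @ [c]) i = Wseq (mk M) \<xi> V h i"
        by (rule Wseq_cong) (simp add: nth_append lh)
      thus ?thesis unfolding good_def using lh[symmetric] by simp
    qed
    thus ?thesis using acc[OF i h] by simp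
  qed
  define Bad where "Bad = {h. \<exists>i. i < J \<and> \<not> ?g i h}"
  have ub: "emeasure (samp D J []) Bad \<le> ennreal (real J * (\<eta> / real J))"
    unfolding Bad_def by (rule union_bound0) (use eta acc' in auto)
  have "real J * (\<eta> / real J) = \<eta>" using J by simp
  with ub have "emeasure (samp D J []) Bad \<le> ennreal \<eta>" by (simp add: Bad_def)
  hence mB: "measure_pmf.prob (samp D J []) Bad \<le> \<eta>"
    using eta by (simp add: measure_pmf.emeasure_eq_measure ennreal_le_iff)
  have sub: "- Bad \<subseteq> {h. \<forall>W. hybrid_output M \<delta> E \<tau> \<xi> J V h W \<longrightarrow>
                 rho M \<delta> E \<tau> W \<ge>
                   (if J \<ge> 2 then (1 - \<epsilon>)^2 / (real (mk M) * (1 + \<xi>) * (1 + \<epsilon>)^2)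
                    else (1 - \<epsilon>)^2 / (real (mk M) * (1 + \<xi>) * (1 + \<epsilon>))) * OPT M \<delta> E \<tau> V}"
  proof (intro subsetI CollectI allI impI)
    fix h W assume "h \<in> - Bad" and o: "hybrid_output M \<delta> E \<tau> \<xi> J V h W"
    hence "\<forall>i<J. ?g i h" by (auto simp: Bad_def)
    thus "rho M \<delta> E \<tau> W \<ge>
                   (if J \<ge> 2 then (1 - \<epsilon>)^2 / (real (mk M) * (1 + \<xi>) * (1 + \<epsilon>)^2)
                    else (1 - \<epsilon>)^2 / (real (mk M) * (1 + \<xi>) * (1 + \<epsilon>))) * OPT M \<delta> E \<tau> V"
      by (rule det[OF net Vne mot taupos xi eps J _ o])
  qed
  have "measure_pmf.prob (samp D J []) (- Bad) = 1 - measure_pmf.prob (samp D J []) Bad"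
    using measure_pmf.prob_compl[of Bad "samp D J []"] by (simp add: Compl_eq_Diff_UNIV)
  hence "measure_pmf.prob (samp D J []) (- Bad) \<ge> 1 - \<eta>" using mB by simp
  also have "measure_pmf.prob (samp D J []) (- Bad) \<le> measure_pmf.prob (samp D J []) {h. \<forall>W. hybrid_output M \<delta> E \<tau> \<xi> J V h W \<longrightarrow>
                 rho M \<delta> E \<tau> W \<ge>
                   (if J \<ge> 2 then (1 - \<epsilon>)^2 / (real (mk M) * (1 + \<xi>) * (1 + \<epsilon>)^2)
                    else (1 - \<epsilon>)^2 / (real (mk M) * (1 + \<xi>) * (1 + \<epsilon>))) * OPT M \<delta> E \<tau> V}"
    by (rule measure_pmf.finite_measure_mono[OF sub]) simp
  finally show ?thesis .
qed

end
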